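(* Let $t>0$ and $\kappa\in(-1,1)$, and put $\epsilon:=\kappa^2$. The map $\phi_{\kappa,t}$ satisfies $\phi_{\kappa,t}(1)=0$ and $\partial_z\phi_{\kappa,t}(1)\neq 0$, so it is locally invertible near $z=1$, with local inverse $\phi_{\kappa,t}^{-1}(u)=1+\sum_{n\ge1}a_n(\kappa,t)u^n$ near $u=0$. For every $n\geq 1$, $$a_n(\kappa,t)=\frac{2}{2^{2n}n}\sum_{k=1}^{n}\binom{2n}{n-k}e^{-kt}\left\{\sum_{m=0}^{k-1}L_{k-m-1}^{(m+1)}(2kt)\,2^{m}\,P_n^{(m)}(\epsilon)\right\}.$$
   Context: Pochhammer symbol: $(a)_0=1$, $(a)_k=a(a+1)\cdots(a+k-1)$ for $k\geq1$ (so $(0)_k=\delta_{k0}$). Laguerre polynomials: for $n\ge0$ and $a\in\mathbb{R}$, $L_n^{(a)}(x):=\frac{1}{n!}\sum_{j=0}^n\frac{(-n)_j}{j!}(a+j+1)_{n-j}x^j$. Let $\alpha(z):=\frac{1-\sqrt{1-z}}{1+\sqrt{1-z}}$ (principal branch), a bijection of $\mathbb{C}\setminus[1,\infty)$ onto the open unit disc $\mathbb{D}$ with inverse $\alpha^{-1}(z)=\frac{4z}{(1+z)^2}$. For $t>0$ let $\xi_{2t}(z):=\frac{z-1}{z+1}e^{tz}$. Define $\phi_{\kappa,t}(z):=\frac{z^2}{z^2-\kappa^2}\,\alpha^{-1}(\xi_{2t}(z))$ near $z=1$, and (Lagrange inversion coefficients) $a_n(\kappa,t):=\frac{1}{n!}\partial_z^{n-1}\left[\frac{z-1}{\phi_{\kappa,t}(z)}\right]^n\Big|_{z=1}$,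 $n\ge1$. For integers $n\geq1$, $m\geq0$, define the polynomial $P_n^{(m)}(\epsilon):=\frac{(-1)^m}{m!}\sum_{k=0}^n\binom{n}{k}(-\epsilon)^k(2k)_m$. *)

theory Defs
  imports "HOL-Analysis.Analysis"
begin

definition laguerre :: "nat \<Rightarrow> real \<Rightarrow> real \<Rightarrow> real" where
  "laguerre n a x = (1 / fact n) *
     (\<Sum>j=0..n. pochhammer (- real n) j / fact j * pochhammer (a + real j + 1) (n - j) * x ^ j)"

definition Ppoly :: "nat \<Rightarrow> nat \<Rightarrow> real \<Rightarrow> real" where
  "Ppoly n m eps = (-1) ^ m / fact m *
     (\<Sum>k=0..n. real (n choose k) * (- eps) ^ k * pochhammer (2 * real k) m)"

definition alpha_inv :: "complex \<Rightarrow> complex" where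
  "alpha_inv w = 4 * w / (1 + w) ^ 2"

definition xi2t :: "real \<Rightarrow> complex \<Rightarrow> complex" where
  "xi2t t z = (z - 1) / (z + 1) * exp (complex_of_real t * z)"

definition phi :: "real \<Rightarrow> real \<Rightarrow> complex \<Rightarrow> complex" where
  "phi \<kappa> t z = z ^ 2 / (z ^ 2 - (complex_of_real \<kappa>) ^ 2) * alpha_inv (xi2t t z)"

definition lag_base :: "real \<Rightarrow> real \<Rightarrow> complex \<Rightarrow> complex" where
  "lag_base \<kappa> t z = (if z = 1 then Lim (at 1) (\<lambda>w. (w - 1) / phi \<kappa> t w)
                      else (z - 1) / phi \<kappa> t z)"

text \<open>Lagrange inversion coefficients a_n = 1/n! d^{n-1}/dz^{n-1} [(z-1)/phi(z)]^n at z = 1.\<close>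
definition a_coef :: "real \<Rightarrow> real \<Rightarrow> nat \<Rightarrow> complex" where
  "a_coef \<kappa> t n = (deriv ^^ (n - 1)) (\<lambda>z. (lag_base \<kappa> t z) ^ n) 1 / fact n"

end

theory Submission
  imports Defs "HOL-Complex_Analysis.Complex_Analysis"
begin


lemma lagrange_key:
  fixes P :: "complex fps"
  assumes P0: "P$0 \<noteq> 0"
  shows "(inverse P ^ j + fps_X * inverse P ^ Suc j * fps_deriv P) $ j = (if j = 0 then 1 else 0)"
proof (cases "j = 0")
  case True
  then show ?thesis by simp
next
  case False
  define G where "G = inverse P"
  have dG: "fps_deriv G = - fps_deriv P * G^2"
    unfolding G_def using P0 by (rule fps_inverse_deriv)
  have "fps_deriv (G^j) = of_nat j * fps_deriv G * G^(j-1)"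
    by (rule fps_deriv_power')
  also have "\<dots> = - of_nat j * (fps_deriv P * G^(Suc j))"
    using False by (simp add: dG power2_eq_square algebra_simps power_Suc[symmetric] del: power_Suc)
  finally have dGj: "fps_deriv (G^j) = - of_nat j * (fps_deriv P * G^(Suc j))" .
  have "fps_X * fps_deriv (G^j) = - (of_nat j * (fps_X * G ^ Suc j * fps_deriv P))"
    by (simp add: dGj algebra_simps)
  hence "of_nat j * (fps_X * G ^ Suc j * fps_deriv P) $ j = - (fps_X * fps_deriv (G^j)) $ j"
    by (simp only: fps_neg_nth fps_mult_of_nat_nth) simp
  also have "\<dots> = - (fps_deriv (G^j)) $ (j - 1)"
    using False by (simp only: fps_neg_nth fps_X_mult_nth) simp
  also have "\<dots> = - of_nat j * (G^j) $ j"
    using False by (simp only: fps_neg_nth fps_deriv_nth Suc_diff_1 neq0_conv) simp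
  finally have "of_nat j * (fps_X * G ^ Suc j * fps_deriv P) $ j = of_nat j * (- (G^j) $ j)"
    by simp
  hence "(fps_X * G ^ Suc j * fps_deriv P) $ j = - (G^j) $ j"
    using False by (subst (asm) mult_left_cancel) auto
  then show ?thesis using False by (simp add: G_def)
qed

lemma lagrange_term:
  fixes P :: "complex fps"
  assumes P0: "P$0 \<noteq> 0" and k: "1 \<le> k" "k \<le> n"
  shows "(inverse P ^ n * ((fps_X * P)^(k-1) * fps_deriv (fps_X * P))) $ (n-1) = (if k = n then 1 else 0)"
proof -
  define G where "G = inverse P"
  define j where "j = n - k"
  have GP: "G * P = 1" unfolding G_def using P0 by (rule inverse_mult_eq_1)
  have n: "n = j + k" using k by (simp add: j_def)
  have "inverse P ^ n * ((fps_X * P)^(k-1) * fps_deriv (fps_X * P))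
        = fps_X^(k-1) * ((G^(k-1) * P^(k-1)) * (G^Suc j * (P + fps_X * fps_deriv P)))"
  proof -
    have "n = (k-1) + Suc j" using k by (simp add: n)
    hence "G^n = G^(k-1) * G^Suc j" by (metis power_add)
    moreover have "fps_deriv (fps_X * P) = P + fps_X * fps_deriv P"
      by (simp add: fps_deriv_mult algebra_simps)
    moreover have "(fps_X * P)^(k-1) = fps_X^(k-1) * P^(k-1)" by (rule power_mult_distrib)
    ultimately show ?thesis unfolding G_def by (simp only: mult_ac)
  qed
  also have "G^(k-1) * P^(k-1) = 1" by (simp add: power_mult_distrib[symmetric] GP)
  also have "G^Suc j * (P + fps_X * fps_deriv P) = G^j + fps_X * G^Suc j * fps_deriv P"
  proof -
    have "G^Suc j * (P + fps_X * fps_deriv P) = G^j * (G * P) + fps_X * G^Suc j * fps_deriv P"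
      by (simp only: power_Suc distrib_left mult_ac)
    thus ?thesis by (simp add: GP)
  qed
  finally have "inverse P ^ n * ((fps_X * P)^(k-1) * fps_deriv (fps_X * P))
        = fps_X^(k-1) * (G^j + fps_X * G^Suc j * fps_deriv P)" by simp
  hence "(inverse P ^ n * ((fps_X * P)^(k-1) * fps_deriv (fps_X * P))) $ (n-1)
        = (G^j + fps_X * G^Suc j * fps_deriv P) $ j"
    using k by (simp add: fps_X_power_mult_nth n)
  also have "\<dots> = (if j = 0 then 1 else 0)"
    unfolding G_def by (rule lagrange_key[OF P0])
  finally show ?thesis using k by (simp add: j_def)
qed

lemma lagrange_fps:
  fixes H P :: "complex fps"
  assumes P0: "P$0 \<noteq> 0" and comp: "fps_compose H (fps_X * P) = 1 + fps_X" and n: "n \<ge> 1"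
  shows "of_nat n * H$n = (inverse P ^ n)$(n-1)"
proof -
  define F where "F = fps_X * P"
  define G where "G = inverse P"
  define T where "T = (\<Sum>k=0..n. fps_const (H$k) * F^k)"
  have Fz: "(F^k) $ m = 0" if "m < k" for k m
    using that by (simp add: F_def power_mult_distrib fps_X_power_mult_nth)
  have coefT: "T $ m = (1 + fps_X) $ m" if "m \<le> n" for m
  proof -
    have "T $ m = (\<Sum>k=0..n. H$k * (F^k) $ m)" by (simp add: T_def fps_sum_nth)
    also have "\<dots> = (\<Sum>k=0..m. H$k * (F^k) $ m)"
      using that by (intro sum.mono_neutral_right) (auto simp: Fz)
    also have "\<dots> = fps_compose H F $ m" by (simp add: fps_compose_nth)
    finally show ?thesis using comp by (simp add: F_def)
  qed
  define D where "D = 1 - fps_deriv T"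
  have Dz: "D $ i = 0" if "i < n" for i
  proof -
    have "D $ i = fps_deriv (1 + fps_X) $ i - fps_deriv T $ i" by (simp add: D_def)
    also have "\<dots> = of_nat (Suc i) * ((1 + fps_X) $ Suc i - T $ Suc i)"
      by (simp only: fps_deriv_nth right_diff_distrib Suc_eq_plus1)
    also have "\<dots> = 0" using that coefT[of "Suc i"] by simp
    finally show ?thesis .
  qed
  have "(G^n * D) $ (n-1) = 0"
    unfolding fps_mult_nth using n by (intro sum.neutral) (auto simp: Dz)
  hence "(G^n) $ (n-1) = (G^n * fps_deriv T) $ (n-1)"
    by (simp add: D_def algebra_simps)
  also have "fps_deriv T = (\<Sum>k=0..n. fps_const (H$k * of_nat k) * (F^(k-1) * fps_deriv F))"
    unfolding T_def by (simp add: fps_deriv_sum fps_deriv_power' fps_of_nat[symmetric] fps_const_mult[symmetric] mult_ac del: fps_const_mult)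
  also have "(G^n * \<dots>) $ (n-1) = (\<Sum>k=0..n. H$k * of_nat k * (G^n * (F^(k-1) * fps_deriv F)) $ (n-1))"
    unfolding sum_distrib_left fps_sum_nth
    by (intro sum.cong refl) (simp only: mult.left_commute[of "G^n"] fps_mult_left_const_nth)
  also have "\<dots> = (\<Sum>k=0..n. if k = n then H$n * of_nat n else 0)"
  proof (intro sum.cong refl)
    fix k assume k: "k \<in> {0..n}"
    show "H$k * of_nat k * (G^n * (F^(k-1) * fps_deriv F)) $ (n-1) = (if k = n then H$n * of_nat n else 0)"
    proof (cases "k = 0")
      case False
      then show ?thesis using k lagrange_term[OF P0, of k n] by (auto simp: F_def G_def)
    qed simp
  qed
  also have "\<dots> = H$n * of_nat n" by simp
  finally show ?thesis by (simp add: G_def mult.commute)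
qed



definition qf :: "real \<Rightarrow> complex \<Rightarrow> complex" where
  "qf t z = exp (complex_of_real t * z) / (z + 1)"
definition psi :: "real \<Rightarrow> real \<Rightarrow> complex \<Rightarrow> complex" where
  "psi \<kappa> t z = z^2 / (z^2 - (complex_of_real \<kappa>)^2) * (4 * qf t z / (1 + (z - 1) * qf t z)^2)"
definition Lf :: "real \<Rightarrow> real \<Rightarrow> complex \<Rightarrow> complex" where
  "Lf \<kappa> t z = (z^2 - (complex_of_real \<kappa>)^2) / z^2 * (1 + (z - 1) * qf t z)^2
      * ((z + 1) * exp (- (complex_of_real t * z))) / 4"

lemma phi_eq: "phi \<kappa> t z = (z - 1) * psi \<kappa> t z"
proof -
  have e: "xi2t t z = (z - 1) * qf t z" unfolding xi2t_def qf_def by simp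
  show ?thesis unfolding phi_def alpha_inv_def e psi_def by (simp add: mult_ac)
qed

lemma Lf_inv: "inverse (psi \<kappa> t z) = Lf \<kappa> t z"
proof -
  define Q where "Q = qf t z"
  have iq: "inverse Q = (z + 1) * exp (- (complex_of_real t * z))"
    unfolding Q_def qf_def by (simp add: exp_minus inverse_divide divide_inverse)
  have "inverse (psi \<kappa> t z) = (z^2 - (complex_of_real \<kappa>)^2) / z^2 * ((1 + (z - 1) * Q)^2 * inverse Q / 4)"
    unfolding psi_def Q_def[symmetric] inverse_mult_distrib inverse_divide
    by (simp only: divide_inverse inverse_mult_distrib mult_ac)
  also have "\<dots> = Lf \<kappa> t z" unfolding Lf_def Q_def[symmetric] iq by (simp only: divide_inverse mult_ac)
  finally show ?thesis .
qed

definition SS :: "real \<Rightarrow> real \<Rightarrow> complex set" where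
  "SS \<kappa> t = ball 1 (1/2) \<inter> (\<lambda>z. (z^2 - (complex_of_real \<kappa>)^2) * (1 + (z - 1) * qf t z)) -` (- {0})"

lemma ball_ne: "dist 1 z < 1/2 \<Longrightarrow> z + 1 \<noteq> (0::complex)"
proof
  assume "dist 1 z < 1/2" "z + 1 = 0"
  hence "z = -1" by (simp add: add_eq_0_iff2)
  with \<open>dist 1 z < 1/2\<close> show False by (simp add: dist_norm)
qed

lemma SS_props:
  assumes "z \<in> SS \<kappa> t"
  shows "z \<noteq> 0" "z + 1 \<noteq> 0" "z^2 - (complex_of_real \<kappa>)^2 \<noteq> 0" "1 + (z - 1) * qf t z \<noteq> 0"
proof -
  have d: "dist 1 z < 1/2" using assms by (simp add: SS_def)
  show "z \<noteq> 0" using d by auto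
  show "z + 1 \<noteq> 0" using d by (rule ball_ne)
  show "z^2 - (complex_of_real \<kappa>)^2 \<noteq> 0" "1 + (z - 1) * qf t z \<noteq> 0"
    using assms by (auto simp: SS_def)
qed

lemma qf_holo: "qf t holomorphic_on SS \<kappa> t"
  unfolding qf_def using SS_props(2) by (intro holomorphic_intros) auto

lemma SS_open: "open (SS \<kappa> t)"
  unfolding SS_def
proof (rule continuous_open_preimage)
  have "qf t holomorphic_on ball 1 (1/2)"
    unfolding qf_def
  proof (intro holomorphic_intros)
    fix z :: complex assume "z \<in> ball 1 (1/2)"
    thus "z + 1 \<noteq> 0" by (intro ball_ne) simp
  qed
  then show "continuous_on (ball 1 (1/2)) (\<lambda>z. (z^2 - (complex_of_real \<kappa>)^2) * (1 + (z - 1) * qf t z))"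
    by (intro continuous_intros holomorphic_on_imp_continuous_on)
qed auto

lemma one_in_SS:
  assumes "-1 < \<kappa>" "\<kappa> < 1"
  shows "1 \<in> SS \<kappa> t"
proof -
  have "\<kappa>^2 < 1" using assms by (simp add: abs_square_less_1) 
  hence "1 - \<kappa>^2 \<noteq> 0" by simp
  hence "complex_of_real (1 - \<kappa>^2) \<noteq> 0" by (metis of_real_eq_0_iff)
  hence "(1::complex) - (complex_of_real \<kappa>)^2 \<noteq> 0" by simp
  thus ?thesis by (simp add: SS_def)
qed

lemma psi_holo: "psi \<kappa> t holomorphic_on SS \<kappa> t"
  unfolding psi_def using SS_props qf_holo by (intro holomorphic_intros) auto

lemma Lf_holo: "Lf \<kappa> t holomorphic_on SS \<kappa> t"
  unfolding Lf_def using SS_props qf_holo by (intro holomorphic_intros) auto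

lemma psi_1: "psi \<kappa> t 1 = 2 * exp (complex_of_real t) / (1 - (complex_of_real \<kappa>)^2)"
  unfolding psi_def qf_def by simp

lemma Lf_1: "Lf \<kappa> t 1 = (1 - (complex_of_real \<kappa>)^2) * exp (- complex_of_real t) / 2"
  unfolding Lf_def qf_def by simp

lemma phi_fun: "phi \<kappa> t = (\<lambda>z. (z - 1) * psi \<kappa> t z)"
  by (rule ext) (rule phi_eq)

lemma phi_deriv:
  assumes "-1 < \<kappa>" "\<kappa> < 1"
  shows "(phi \<kappa> t has_field_derivative psi \<kappa> t 1) (at 1)"
proof -
  have d: "(psi \<kappa> t has_field_derivative deriv (psi \<kappa> t) 1) (at 1)"
    using holomorphic_derivI[OF psi_holo SS_open one_in_SS[OF assms]] .
  have "((\<lambda>z. z - 1) has_field_derivative 1) (at (1::complex))"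
    by (auto intro!: derivative_eq_intros)
  from DERIV_mult'[OF this d] show ?thesis unfolding phi_fun by simp
qed

lemma psi1_nz:
  assumes "-1 < \<kappa>" "\<kappa> < 1"
  shows "psi \<kappa> t 1 \<noteq> 0"
proof -
  have "(1::complex) - (complex_of_real \<kappa>)^2 \<noteq> 0"
    using one_in_SS[OF assms, of t] by (simp add: SS_def)
  thus ?thesis by (simp add: psi_1)
qed

lemma lag_base_eq:
  assumes "-1 < \<kappa>" "\<kappa> < 1"
  shows "lag_base \<kappa> t = Lf \<kappa> t"
proof
  fix z
  have gen: "(w - 1) / phi \<kappa> t w = Lf \<kappa> t w" if "w \<noteq> 1" for w
  proof -
    have "w - 1 \<noteq> 0" using that by simp
    hence "(w - 1) / ((w - 1) * psi \<kappa> t w) = inverse (psi \<kappa> t w)"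
      by (cases "psi \<kappa> t w = 0") (simp_all add: divide_inverse inverse_mult_distrib)
    thus ?thesis by (simp add: phi_eq Lf_inv)
  qed
  show "lag_base \<kappa> t z = Lf \<kappa> t z"
  proof (cases "z = 1")
    case False
    thus ?thesis by (simp add: lag_base_def gen)
  next
    case True
    have "isCont (Lf \<kappa> t) 1"
      using continuous_on_eq_continuous_at[OF SS_open] holomorphic_on_imp_continuous_on[OF Lf_holo]
        one_in_SS[OF assms] by blast
    hence lim: "(Lf \<kappa> t \<longlongrightarrow> Lf \<kappa> t 1) (at 1)" by (simp add: isCont_def)
    have ev: "eventually (\<lambda>w. Lf \<kappa> t w = (w - 1) / phi \<kappa> t w) (at (1::complex))"
      by (simp add: eventually_at_filter gen)
    have "((\<lambda>w. (w - 1) / phi \<kappa> t w) \<longlongrightarrow> Lf \<kappa> t 1) (at 1)"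
      using tendsto_cong[OF ev] lim by simp
    hence "Lim (at 1) (\<lambda>w. (w - 1) / phi \<kappa> t w) = Lf \<kappa> t 1"
      by (intro tendsto_Lim) simp_all
    thus ?thesis using True by (simp add: lag_base_def)
  qed
qed

definition Afps :: "real \<Rightarrow> complex fps" where
  "Afps \<kappa> = 1 - fps_const ((complex_of_real \<kappa>)^2) * inverse ((1 + fps_X)^2)"
definition Qfps :: "real \<Rightarrow> complex fps" where
  "Qfps t = fps_const (exp (complex_of_real t)) * fps_exp (complex_of_real t) * inverse (2 + fps_X)"
definition Qifps :: "real \<Rightarrow> complex fps" where
  "Qifps t = (2 + fps_X) * fps_const (exp (- complex_of_real t)) * fps_exp (- complex_of_real t)"
definition Gf :: "real \<Rightarrow> real \<Rightarrow> complex fps" where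
  "Gf \<kappa> t = Afps \<kappa> * (1 + fps_X * Qfps t)^2 * Qifps t * fps_const (1/4)"

lemma Gf_expansion: "(\<lambda>w. Lf \<kappa> t (w + 1)) has_fps_expansion Gf \<kappa> t"
proof -
  define c where "c = complex_of_real \<kappa>"
  define s where "s = complex_of_real t"
  have eA: "(\<lambda>w. 1 - c^2 * inverse ((1 + w)^2)) has_fps_expansion Afps \<kappa>"
    unfolding Afps_def c_def by (intro fps_expansion_intros) simp
  have eQ: "(\<lambda>w. exp s * exp (s * w) * inverse (2 + w)) has_fps_expansion Qfps t"
    unfolding Qfps_def s_def by (intro fps_expansion_intros) simp
  have eQi: "(\<lambda>w. (2 + w) * exp (- s) * exp ((- s) * w)) has_fps_expansion Qifps t"
    unfolding Qifps_def s_def by (intro fps_expansion_intros)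
  have e: "(\<lambda>w. (1 - c^2 * inverse ((1 + w)^2)) * (1 + w * (exp s * exp (s * w) * inverse (2 + w)))^2
            * ((2 + w) * exp (- s) * exp ((- s) * w)) * (1/4)) has_fps_expansion Gf \<kappa> t"
    unfolding Gf_def by (intro fps_expansion_intros eA eQ eQi)
  have ev: "eventually (\<lambda>w. w \<in> ball 0 (1/2)) (nhds (0::complex))"
    by (intro eventually_nhds_in_open) auto
  have "eventually (\<lambda>w. (1 - c^2 * inverse ((1 + w)^2)) * (1 + w * (exp s * exp (s * w) * inverse (2 + w)))^2
            * ((2 + w) * exp (- s) * exp ((- s) * w)) * (1/4) = Lf \<kappa> t (w + 1)) (nhds 0)"
    using ev
  proof eventually_elim
    case (elim w)
    have w1: "1 + w \<noteq> 0"
    proof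
      assume "1 + w = 0" hence "w = -1" by (metis add.commute add_eq_0_iff2)
      with elim show False by simp
    qed
    have w2: "2 + w \<noteq> 0"
    proof
      assume "2 + w = 0" hence "w = -2" by (metis add.commute add_eq_0_iff2)
      with elim show False by simp
    qed
    have A: "1 - c^2 * inverse ((1 + w)^2) = ((w + 1)^2 - c^2) / (w + 1)^2"
      using w1 by (simp add: field_simps add.commute)
    have Q: "exp s * exp (s * w) * inverse (2 + w) = qf t (w + 1)"
      using w2 by (simp add: qf_def s_def field_simps exp_add[symmetric] add.commute)
    have Qi: "(2 + w) * exp (- s) * exp ((- s) * w) = ((w + 1) + 1) * exp (- (complex_of_real t * (w + 1)))"
      by (simp add: s_def exp_add[symmetric] algebra_simps)
    show ?case unfolding Q Qi Lf_def A[unfolded c_def] c_def by simp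
  qed
  from has_fps_expansion_cong[OF this refl] e show ?thesis by simp
qed

lemma phi_holo: "phi \<kappa> t holomorphic_on SS \<kappa> t"
  unfolding phi_fun using psi_holo by (intro holomorphic_intros)

lemma inverse_exists:
  assumes "-1 < \<kappa>" "\<kappa> < 1"
  obtains s g where "s > 0" "g holomorphic_on ball 0 s" "\<And>u. u \<in> ball 0 s \<Longrightarrow> phi \<kappa> t (g u) = u"
    "g 0 = 1" "eventually (\<lambda>w. g (phi \<kappa> t (w + 1)) = w + 1) (nhds 0)"
proof -
  have dnz: "deriv (phi \<kappa> t) 1 \<noteq> 0"
    using DERIV_imp_deriv[OF phi_deriv[OF assms]] psi1_nz[OF assms] by simp
  obtain r where r: "r > 0" "ball 1 r \<subseteq> SS \<kappa> t" "open (phi \<kappa> t ` ball 1 r)" "inj_on (phi \<kappa> t) (ball 1 r)"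
    using has_complex_derivative_locally_invertible[OF phi_holo one_in_SS[OF assms] SS_open dnz] by blast
  have hol: "phi \<kappa> t holomorphic_on ball 1 r" using phi_holo r(2) by (rule holomorphic_on_subset)
  obtain g where g: "g holomorphic_on (phi \<kappa> t ` ball 1 r)" "\<And>z. z \<in> ball 1 r \<Longrightarrow> g (phi \<kappa> t z) = z"
    using holomorphic_has_inverse[OF hol open_ball r(4)] by metis
  have p1: "phi \<kappa> t 1 = 0" by (simp add: phi_eq)
  have "0 \<in> phi \<kappa> t ` ball 1 r" using r(1) p1 by (metis centre_in_ball imageI)
  then obtain s where s: "s > 0" "ball 0 s \<subseteq> phi \<kappa> t ` ball 1 r"
    using r(3) openE by blast
  show ?thesis
  proof (rule that[of s g])
    show "g holomorphic_on ball 0 s" using g(1) s(2) by (rule holomorphic_on_subset)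
    show "phi \<kappa> t (g u) = u" if "u \<in> ball 0 s" for u
    proof -
      from that s(2) obtain z where "z \<in> ball 1 r" "u = phi \<kappa> t z" by blast
      thus ?thesis using g(2) by simp
    qed
    show "g 0 = 1" using g(2)[of 1] r(1) p1 by simp
    have "eventually (\<lambda>w. w \<in> ball 0 r) (nhds (0::complex))"
      using r(1) by (intro eventually_nhds_in_open) auto
    thus "eventually (\<lambda>w. g (phi \<kappa> t (w + 1)) = w + 1) (nhds 0)"
    proof eventually_elim
      case (elim w)
      hence "w + 1 \<in> ball 1 r" by (simp add: dist_norm)
      thus ?case using g(2) by blast
    qed
  qed (use s in auto)
qed

lemma Gf0: "Gf \<kappa> t $ 0 = Lf \<kappa> t 1"
  using has_fps_expansion_imp_0_eq_fps_nth_0[OF Gf_expansion[of \<kappa> t]] by simp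

lemma Lf1_nz:
  assumes "-1 < \<kappa>" "\<kappa> < 1"
  shows "Lf \<kappa> t 1 \<noteq> 0"
proof -
  have "(1::complex) - (complex_of_real \<kappa>)^2 \<noteq> 0"
    using one_in_SS[OF assms, of t] by (simp add: SS_def)
  thus ?thesis by (simp add: Lf_1)
qed

lemma shift_deriv:
  assumes "-1 < \<kappa>" "\<kappa> < 1"
  shows "(deriv ^^ m) (\<lambda>w. Lf \<kappa> t (w + 1) ^ n) 0 = (deriv ^^ m) (\<lambda>z. Lf \<kappa> t z ^ n) 1"
proof -
  obtain e where e: "e > 0" "ball 1 e \<subseteq> SS \<kappa> t"
    using SS_open one_in_SS[OF assms] openE by blast
  have hol: "(\<lambda>z. Lf \<kappa> t z ^ n) holomorphic_on ball 1 e"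
    using holomorphic_on_subset[OF Lf_holo e(2)] by (intro holomorphic_intros)
  have "(deriv ^^ m) (\<lambda>w. Lf \<kappa> t (1 * w + 1) ^ n) 0 = 1 ^ m * (deriv ^^ m) (\<lambda>z. Lf \<kappa> t z ^ n) (1 * 0 + 1)"
    by (rule higher_deriv_compose_linear'[OF hol, of "ball 0 e"]) (use e in \<open>auto simp: dist_norm\<close>)
  thus ?thesis by simp
qed

lemma a_coef_Gf:
  assumes k: "-1 < \<kappa>" "\<kappa> < 1" and n: "n \<ge> 1"
  shows "(Gf \<kappa> t ^ n) $ (n - 1) = of_nat n * a_coef \<kappa> t n"
proof -
  have "(Gf \<kappa> t ^ n) $ (n - 1) = (deriv ^^ (n - 1)) (\<lambda>w. Lf \<kappa> t (w + 1) ^ n) 0 / fact (n - 1)"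
    by (rule fps_nth_fps_expansion) (intro fps_expansion_intros Gf_expansion)
  also have "\<dots> = (deriv ^^ (n - 1)) (\<lambda>z. lag_base \<kappa> t z ^ n) 1 / fact (n - 1)"
    by (simp add: shift_deriv[OF k] lag_base_eq[OF k])
  also have "\<dots> = of_nat n * a_coef \<kappa> t n"
  proof -
    have "fact n = (of_nat n * fact (n - 1) :: complex)"
      using n by (metis fact_nonzero fact_num_eq_if not_one_le_zero of_nat_fact)
    thus ?thesis unfolding a_coef_def using n by (simp add: field_simps)
  qed
  finally show ?thesis .
qed

lemma coef_match:
  assumes k: "-1 < \<kappa>" "\<kappa> < 1" and s: "s > 0" and gh: "g holomorphic_on ball 0 s"
    and ev: "eventually (\<lambda>w. g (phi \<kappa> t (w + 1)) = w + 1) (nhds 0)" and n: "n \<ge> 1"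
  shows "(deriv ^^ n) g 0 / fact n = a_coef \<kappa> t n"
proof -
  define Hf where "Hf = fps_expansion g 0"
  have eH: "g has_fps_expansion Hf" unfolding Hf_def using s gh by (intro has_fps_expansion_fps_expansion) auto
  define Pf where "Pf = inverse (Gf \<kappa> t)"
  have G0: "Gf \<kappa> t $ 0 \<noteq> 0" using Gf0 Lf1_nz[OF k] by simp
  have "(\<lambda>w. inverse (Lf \<kappa> t (w + 1))) has_fps_expansion Pf"
    unfolding Pf_def using Gf_expansion G0 by (rule has_fps_expansion_inverse)
  hence eP: "(\<lambda>w. psi \<kappa> t (w + 1)) has_fps_expansion Pf"
    by (simp add: Lf_inv[symmetric])
  have ePhi: "(\<lambda>w. phi \<kappa> t (w + 1)) has_fps_expansion fps_X * Pf"
  proof -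
    have "(\<lambda>w. w * psi \<kappa> t (w + 1)) has_fps_expansion fps_X * Pf"
      by (intro fps_expansion_intros eP)
    thus ?thesis by (simp add: phi_eq)
  qed
  have comp: "(g \<circ> (\<lambda>w. phi \<kappa> t (w + 1))) has_fps_expansion fps_compose Hf (fps_X * Pf)"
    by (rule has_fps_expansion_compose[OF eH ePhi]) simp
  have "(\<lambda>w. w + 1) has_fps_expansion fps_X + 1" by (intro fps_expansion_intros)
  hence "(g \<circ> (\<lambda>w. phi \<kappa> t (w + 1))) has_fps_expansion fps_X + 1"
    using has_fps_expansion_cong[of "g \<circ> (\<lambda>w. phi \<kappa> t (w + 1))" "\<lambda>w. w + 1" "fps_X + 1" "fps_X + 1"] ev
    by (simp add: o_def)
  hence c: "fps_compose Hf (fps_X * Pf) = 1 + fps_X"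
    using fps_expansion_unique_complex[OF comp] by (simp add: add.commute)
  have P0: "Pf $ 0 \<noteq> 0" unfolding Pf_def using G0 by simp
  have L: "of_nat n * Hf $ n = (inverse Pf ^ n) $ (n - 1)"
    by (rule lagrange_fps[OF P0 c n])
  have iP: "inverse Pf = Gf \<kappa> t" unfolding Pf_def using G0 by (rule fps_inverse_idempotent)
  have "of_nat n * Hf $ n = of_nat n * a_coef \<kappa> t n" using L iP a_coef_Gf[OF k n] by simp
  hence "Hf $ n = a_coef \<kappa> t n" using n by simp
  thus ?thesis by (simp add: Hf_def fps_expansion_def)
qed



lemma poch_nat: "pochhammer (real a + 1) b = fact (a + b) / fact a"
proof -
  have "pochhammer (1::real) (a + b) = pochhammer 1 a * pochhammer (1 + of_nat a) b"
    by (rule pochhammer_product')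
  hence "fact (a + b) = (fact a * pochhammer (real a + 1) b :: real)"
    by (simp add: pochhammer_fact add.commute)
  thus ?thesis by (simp add: field_simps)
qed

lemma lag_term:
  assumes k: "k = m + 1 + p" and j: "j \<le> p"
  shows "real (k choose (p - j)) * 2^(k - (p - j)) * (-(real k * t))^j / fact j
       = 2^(m+1) * (1 / fact p) * (pochhammer (- real p) j / fact j
          * pochhammer (real m + 1 + real j + 1) (p - j) * (2 * real k * t)^j)"
proof -
  have P1: "pochhammer (- real p) j = (-1)^j * (fact p / fact (p - j))"
  proof -
    have e: "real p - of_nat j + 1 = real (p - j) + 1" using j by simp
    have "pochhammer (- real p) j = (-1)^j * pochhammer (real (p - j) + 1) j"
      unfolding pochhammer_minus[of "real p" j] e ..
    also have "pochhammer (real (p - j) + 1) j = fact p / fact (p - j)"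
      using poch_nat[of "p - j" j] j by (simp only: le_add_diff_inverse2)
    finally show ?thesis .
  qed
  have P2: "pochhammer (real m + 1 + real j + 1) (p - j) = fact k / fact (m + j + 1)"
  proof -
    have "real m + 1 + real j + 1 = real (m + j + 1) + 1" by simp
    hence "pochhammer (real m + 1 + real j + 1) (p - j) = pochhammer (real (m + j + 1) + 1) (p - j)" by simp
    also have "\<dots> = fact (m + j + 1 + (p - j)) / fact (m + j + 1)" by (rule poch_nat)
    also have "m + j + 1 + (p - j) = k" using j k by simp
    finally show ?thesis .
  qed
  have kpj: "k - (p - j) = m + j + 1" using j k by simp
  have C: "real (k choose (p - j)) = fact k / (fact (p - j) * fact (m + j + 1))"
    using binomial_fact[of "p - j" k, where 'a=real] j k kpj by simp
  have pw: "(2::real)^(m + j + 1) = 2^(m+1) * 2^j" by (simp add: power_add)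
  have m1: "(-(real k * t))^j = (-1)^j * (real k * t)^j" by (rule power_minus)
  have m2: "(2 * real k * t)^j = 2^j * (real k * t)^j" by (simp add: power_mult_distrib mult.assoc)
  have ab: "a / (b * c) * (M * J) * (S * X) / d = M * (1 / e) * (S * (e / b) / d * (a / c) * (J * X))"
    if "b \<noteq> 0" "c \<noteq> 0" "d \<noteq> 0" "e \<noteq> 0" for a b c d e M J S X :: real
    using that by (simp add: field_simps)
  show ?thesis
    unfolding P1 P2 C kpj pw m1 m2 by (rule ab) simp_all
qed

lemma lag_sum:
  assumes k: "k = m + 1 + p"
  shows "(\<Sum>i=0..p. real (k choose i) * 2^(k-i) * (-(real k * t))^(p-i) / fact (p-i))
       = 2^(m+1) * laguerre p (real m + 1) (2 * real k * t)"
proof -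
  have "(\<Sum>i=0..p. real (k choose i) * 2^(k-i) * (-(real k * t))^(p-i) / fact (p-i))
      = (\<Sum>j=0..p. real (k choose (p - j)) * 2^(k-(p - j)) * (-(real k * t))^(p-(p - j)) / fact (p-(p - j)))"
    by (subst sum.atLeastAtMost_rev) simp
  also have "\<dots> = (\<Sum>j=0..p. 2^(m+1) * (1 / fact p) * (pochhammer (- real p) j / fact j
          * pochhammer (real m + 1 + real j + 1) (p - j) * (2 * real k * t)^j))"
    by (intro sum.cong refl) (use lag_term[OF k] in auto)
  also have "\<dots> = 2^(m+1) * laguerre p (real m + 1) (2 * real k * t)"
    unfolding laguerre_def by (simp add: sum_distrib_left)
  finally show ?thesis .
qed



lemma binom_fps_nth:
  "((fps_X + fps_const (a::complex))^k) $ i = of_nat (k choose i) * a^(k-i)"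
proof -
  have "(fps_X + fps_const a)^k = (\<Sum>l\<le>k. fps_const (of_nat (k choose l) * a^(k-l)) * fps_X^l)"
    unfolding binomial_ring by (intro sum.cong refl) (simp add: fps_of_nat[symmetric] mult_ac)
  hence "((fps_X + fps_const a)^k) $ i = (\<Sum>l\<le>k. of_nat (k choose l) * a^(k-l) * (if i = l then 1 else 0))"
    by (simp add: fps_sum_nth)
  also have "\<dots> = of_nat (k choose i) * a^(k-i)"
    by (cases "i \<le> k") (simp_all add: sum.delta' if_distrib[of "\<lambda>x. _ * x"] cong: if_cong)
  finally show ?thesis .
qed

lemma coef1:
  fixes U V B :: "complex fps"
  assumes UV: "U * V = 1" and n: "n \<ge> 1"
  shows "(B * (1 + fps_X * U)^(2*n) * V^n) $ (n-1) = (\<Sum>k=1..n. of_nat (2*n choose (n-k)) * (B * V^k) $ (k-1))"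
proof -
  have "(1 + fps_X * U)^(2*n) = (\<Sum>j\<le>2*n. of_nat (2*n choose j) * (fps_X * U)^j)"
    using binomial_ring[of "fps_X * U" 1 "2*n"] by (simp add: add.commute)
  hence "B * (1 + fps_X * U)^(2*n) * V^n = (\<Sum>j\<le>2*n. of_nat (2*n choose j) * (fps_X^j * (B * U^j * V^n)))"
    by (simp add: sum_distrib_left sum_distrib_right power_mult_distrib mult_ac)
  hence "(B * (1 + fps_X * U)^(2*n) * V^n) $ (n-1)
      = (\<Sum>j\<le>2*n. of_nat (2*n choose j) * (if n - 1 < j then 0 else (B * U^j * V^n) $ (n - 1 - j)))"
    by (simp add: fps_sum_nth fps_X_power_mult_nth del: One_nat_def)
  also have "\<dots> = (\<Sum>j\<in>{..<n}. of_nat (2*n choose j) * (B * V^(n-j)) $ (n - 1 - j))"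
  proof -
    have "(\<Sum>j\<le>2*n. of_nat (2*n choose j) * (if n - 1 < j then 0 else (B * U^j * V^n) $ (n - 1 - j)))
        = (\<Sum>j\<in>{..<n}. of_nat (2*n choose j) * (if n - 1 < j then 0 else (B * U^j * V^n) $ (n - 1 - j)))"
      using n by (intro sum.mono_neutral_right) auto
    also have "\<dots> = (\<Sum>j\<in>{..<n}. of_nat (2*n choose j) * (B * V^(n-j)) $ (n - 1 - j))"
    proof (intro sum.cong refl)
      fix j assume j: "j \<in> {..<n}"
      have "V^n = V^j * V^(n-j)" using j by (simp add: power_add[symmetric])
      hence "B * U^j * V^n = B * V^(n-j) * (U * V)^j" by (simp add: power_mult_distrib mult_ac)
      hence eq: "B * U^j * V^n = B * V^(n-j)" using UV by simp
      thus "of_nat (2*n choose j) * (if n - 1 < j then 0 else (B * U^j * V^n) $ (n - 1 - j))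
          = of_nat (2*n choose j) * (B * V^(n-j)) $ (n - 1 - j)" using j by (simp only: eq) auto
    qed
    finally show ?thesis .
  qed
  also have "\<dots> = (\<Sum>k=1..n. of_nat (2*n choose (n-k)) * (B * V^k) $ (k-1))"
    by (rule sum.reindex_bij_witness[where i="\<lambda>k. n - k" and j="\<lambda>j. n - j"]) auto
  finally show ?thesis .
qed

lemma QQi: "Qfps t * Qifps t = 1"
proof -
  have i2: "inverse (2 + fps_X) * (2 + fps_X :: complex fps) = 1"
    by (rule inverse_mult_eq_1) simp
  have e: "fps_exp (complex_of_real t) * fps_exp (- complex_of_real t) = 1"
    by (simp add: fps_exp_add_mult[symmetric])
  have "Qfps t * Qifps t = fps_const (exp (complex_of_real t) * exp (- complex_of_real t))
      * (fps_exp (complex_of_real t) * fps_exp (- complex_of_real t)) * (inverse (2 + fps_X) * (2 + fps_X))"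
    unfolding Qfps_def Qifps_def by (simp add: mult_ac)
  also have "\<dots> = 1" by (simp add: i2 e exp_minus)
  finally show ?thesis .
qed

lemma Qi_pow_nth:
  "(Qifps t ^ k) $ p = complex_of_real (exp (- real k * t) *
     (\<Sum>i=0..p. real (k choose i) * 2^(k-i) * (-(real k * t))^(p-i) / fact (p-i)))"
proof -
  define s where "s = complex_of_real t"
  have eq: "Qifps t ^ k = fps_const (exp (- s) ^ k) * ((fps_X + fps_const 2)^k * fps_exp (of_nat k * - s))"
    unfolding Qifps_def s_def by (simp add: power_mult_distrib fps_exp_power_mult mult_ac fps_numeral_fps_const)
  have "(Qifps t ^ k) $ p = exp (- s) ^ k * (\<Sum>i=0..p. (of_nat (k choose i) * 2^(k-i)) * ((of_nat k * - s)^(p-i) / of_nat (fact (p-i))))"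
    unfolding eq fps_mult_left_const_nth by (simp only: fps_mult_nth binom_fps_nth fps_exp_nth)
  also have "\<dots> = complex_of_real (exp (- real k * t) *
     (\<Sum>i=0..p. real (k choose i) * 2^(k-i) * (-(real k * t))^(p-i) / fact (p-i)))"
    by (simp add: s_def exp_of_nat_mult[symmetric] sum_distrib_left mult_ac exp_of_real[symmetric])
  finally show ?thesis .
qed

lemma A_pow_nth: "(Afps \<kappa> ^ n) $ m = complex_of_real (Ppoly n m (\<kappa>^2))"
proof -
  define c where "c = (complex_of_real \<kappa>)^2"
  define B where "B = fps_binomial (-2 :: complex)"
  have iB: "inverse ((1 + fps_X)^2) = B"
    unfolding B_def using fps_binomial_minus_of_nat[of 2, where 'a=complex] by simp
  have A: "Afps \<kappa> = fps_const (-c) * B + 1" unfolding Afps_def iB c_def by (simp add: fps_const_neg[symmetric] del: fps_const_neg)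
  have "Afps \<kappa> ^ n = (\<Sum>j\<le>n. fps_const (of_nat (n choose j) * (-c)^j) * fps_binomial (of_nat j * -2))"
    unfolding A binomial_ring
    by (intro sum.cong refl) (simp add: power_mult_distrib B_def fps_binomial_power fps_of_nat[symmetric] mult_ac)
  hence "(Afps \<kappa> ^ n) $ m = (\<Sum>j\<le>n. of_nat (n choose j) * (-c)^j * ((of_nat j * -2) gchoose m))"
    by (simp add: fps_sum_nth)
  also have "\<dots> = (\<Sum>j\<le>n. of_nat (n choose j) * (-c)^j * ((-1)^m * pochhammer (2 * of_nat j) m / fact m))"
    by (intro sum.cong refl) (simp add: gbinomial_pochhammer mult_ac)
  also have "\<dots> = complex_of_real (Ppoly n m (\<kappa>^2))"
    unfolding Ppoly_def c_def
    by (simp add: atMost_atLeast0 sum_distrib_left pochhammer_of_real[symmetric] mult_ac)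
  finally show ?thesis .
qed

lemma inner_sum:
  assumes k: "k \<ge> 1"
  shows "(Afps \<kappa> ^ n * Qifps t ^ k) $ (k - 1) = complex_of_real (2 * (exp (- real k * t) *
             (\<Sum>m=0..k-1. laguerre (k - m - 1) (real m + 1) (2 * real k * t) * 2 ^ m * Ppoly n m (\<kappa> ^ 2))))"
proof -
  have "(Afps \<kappa> ^ n * Qifps t ^ k) $ (k - 1) = (\<Sum>m=0..k-1. (Afps \<kappa> ^ n) $ m * (Qifps t ^ k) $ (k - 1 - m))"
    by (rule fps_mult_nth)
  also have "\<dots> = (\<Sum>m=0..k-1. complex_of_real (Ppoly n m (\<kappa>^2) * (exp (- real k * t) * (2^(m+1) * laguerre (k - m - 1) (real m + 1) (2 * real k * t)))))"
  proof (intro sum.cong refl)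
    fix m assume m: "m \<in> {0..k-1}"
    have kk: "k = m + 1 + (k - 1 - m)" using m k by auto
    have "(Qifps t ^ k) $ (k - 1 - m) = complex_of_real (exp (- real k * t) * (2^(m+1) * laguerre (k - 1 - m) (real m + 1) (2 * real k * t)))"
      unfolding Qi_pow_nth lag_sum[OF kk] ..
    moreover have "k - 1 - m = k - m - 1" by simp
    ultimately show "(Afps \<kappa> ^ n) $ m * (Qifps t ^ k) $ (k - 1 - m) = complex_of_real (Ppoly n m (\<kappa>^2) * (exp (- real k * t) * (2^(m+1) * laguerre (k - m - 1) (real m + 1) (2 * real k * t))))"
      by (simp add: A_pow_nth)
  qed
  also have "\<dots> = complex_of_real (2 * (exp (- real k * t) *
             (\<Sum>m=0..k-1. laguerre (k - m - 1) (real m + 1) (2 * real k * t) * 2 ^ m * Ppoly n m (\<kappa> ^ 2))))"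
    by (simp only: of_real_sum[symmetric]) (simp add: sum_distrib_left mult_ac)
  finally show ?thesis .
qed

lemma a_coef_formula:
  fixes t \<kappa> :: real
  assumes "t > 0" and "-1 < \<kappa>" and "\<kappa> < 1" and "n \<ge> 1"
  shows "a_coef \<kappa> t n = complex_of_real
         (2 / (2 ^ (2 * n) * real n) *
          (\<Sum>k=1..n. real ((2 * n) choose (n - k)) * exp (- real k * t) *
             (\<Sum>m=0..k-1. laguerre (k - m - 1) (real m + 1) (2 * real k * t) * 2 ^ m
                            * Ppoly n m (\<kappa> ^ 2))))"
proof -
  define R where "R = (\<Sum>k=1..n. real ((2 * n) choose (n - k)) * exp (- real k * t) *
             (\<Sum>m=0..k-1. laguerre (k - m - 1) (real m + 1) (2 * real k * t) * 2 ^ m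
                            * Ppoly n m (\<kappa> ^ 2)))"
  have G: "Gf \<kappa> t ^ n = fps_const ((1/4)^n) * (Afps \<kappa> ^ n * (1 + fps_X * Qfps t)^(2*n) * Qifps t ^ n)"
    unfolding Gf_def by (simp add: power_mult_distrib power_mult[symmetric] mult_ac)
  have "(Gf \<kappa> t ^ n) $ (n - 1) = (1/4)^n * (\<Sum>k=1..n. of_nat (2*n choose (n-k)) * (Afps \<kappa> ^ n * Qifps t ^ k) $ (k-1))"
    unfolding G fps_mult_left_const_nth coef1[OF QQi assms(4)] ..
  also have "\<dots> = (1/4)^n * (\<Sum>k=1..n. of_nat (2*n choose (n-k)) * complex_of_real (2 * (exp (- real k * t) *
             (\<Sum>m=0..k-1. laguerre (k - m - 1) (real m + 1) (2 * real k * t) * 2 ^ m * Ppoly n m (\<kappa> ^ 2)))))"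
    by (intro arg_cong[where f="\<lambda>x. (1/4)^n * x"] sum.cong refl) (subst inner_sum, auto)
  also have "\<dots> = complex_of_real ((1/4)^n * 2 * R)"
    unfolding R_def by (simp add: sum_distrib_left mult_ac)
  finally have "of_nat n * a_coef \<kappa> t n = complex_of_real ((1/4)^n * 2 * R)"
    using a_coef_Gf[OF assms(2,3,4)] by simp
  hence "a_coef \<kappa> t n = complex_of_real ((1/4)^n * 2 * R) / of_nat n"
    using assms(4) by (simp add: field_simps)
  also have "\<dots> = complex_of_real (2 / (2 ^ (2 * n) * real n) * R)"
  proof -
    have f: "(1/4::real)^n = 1 / 2^(2*n)" by (simp add: power_mult power_one_over)
    show ?thesis unfolding f using assms(4) by (simp add: field_simps)
  qed
  finally show ?thesis unfolding R_def .
qed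


theorem proposition3p1:
  fixes t \<kappa> :: real
  assumes "t > 0" and "-1 < \<kappa>" and "\<kappa> < 1"
  shows "phi \<kappa> t 1 = 0 \<and> phi \<kappa> t field_differentiable at 1 \<and> deriv (phi \<kappa> t) 1 \<noteq> 0
    \<and> (\<exists>r>0. \<forall>u. norm u < r \<longrightarrow>
          summable (\<lambda>n. a_coef \<kappa> t (Suc n) * u ^ Suc n) \<and>
          phi \<kappa> t (1 + (\<Sum>n. a_coef \<kappa> t (Suc n) * u ^ Suc n)) = u)
    \<and> (\<forall>n\<ge>1. a_coef \<kappa> t n = complex_of_real
         (2 / (2 ^ (2 * n) * real n) *
          (\<Sum>k=1..n. real ((2 * n) choose (n - k)) * exp (- real k * t) *
             (\<Sum>m=0..k-1. laguerre (k - m - 1) (real m + 1) (2 * real k * t) * 2 ^ m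
                            * Ppoly n m (\<kappa> ^ 2)))))"
proof (intro conjI)
  note k = assms(2,3)
  show "phi \<kappa> t 1 = 0" by (simp add: phi_eq)
  show "phi \<kappa> t field_differentiable at 1"
    using phi_deriv[OF k] field_differentiable_def by blast
  show "deriv (phi \<kappa> t) 1 \<noteq> 0"
    using DERIV_imp_deriv[OF phi_deriv[OF k]] psi1_nz[OF k] by simp
  show "\<forall>n\<ge>1. a_coef \<kappa> t n = complex_of_real
         (2 / (2 ^ (2 * n) * real n) *
          (\<Sum>k=1..n. real ((2 * n) choose (n - k)) * exp (- real k * t) *
             (\<Sum>m=0..k-1. laguerre (k - m - 1) (real m + 1) (2 * real k * t) * 2 ^ m
                            * Ppoly n m (\<kappa> ^ 2))))"
    using a_coef_formula[OF assms] by blast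
  obtain s g where sg: "s > 0" "g holomorphic_on ball 0 s" "\<And>u. u \<in> ball 0 s \<Longrightarrow> phi \<kappa> t (g u) = u"
    "g 0 = 1" "eventually (\<lambda>w. g (phi \<kappa> t (w + 1)) = w + 1) (nhds 0)"
    using inverse_exists[OF k] by metis
  show "\<exists>r>0. \<forall>u. norm u < r \<longrightarrow>
          summable (\<lambda>n. a_coef \<kappa> t (Suc n) * u ^ Suc n) \<and>
          phi \<kappa> t (1 + (\<Sum>n. a_coef \<kappa> t (Suc n) * u ^ Suc n)) = u"
  proof (intro exI[of _ s] conjI allI impI sg(1))
    fix u :: complex assume u: "norm u < s"
    hence ub: "u \<in> ball 0 s" by simp
    have "(\<lambda>n. (deriv ^^ n) g 0 / fact n * (u - 0) ^ n) sums g u"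
      by (rule holomorphic_power_series[OF sg(2) ub])
    hence "(\<lambda>n. (deriv ^^ Suc n) g 0 / fact (Suc n) * u ^ Suc n) sums (g u - 1)"
      using sg(4) by (subst sums_Suc_iff) simp
    also have "(\<lambda>n. (deriv ^^ Suc n) g 0 / fact (Suc n) * u ^ Suc n) = (\<lambda>n. a_coef \<kappa> t (Suc n) * u ^ Suc n)"
    proof
      fix n
      have "(deriv ^^ Suc n) g 0 / fact (Suc n) = a_coef \<kappa> t (Suc n)"
        by (rule coef_match[OF k sg(1,2,5)]) simp
      thus "(deriv ^^ Suc n) g 0 / fact (Suc n) * u ^ Suc n = a_coef \<kappa> t (Suc n) * u ^ Suc n" by simp
    qed
    finally have S: "(\<lambda>n. a_coef \<kappa> t (Suc n) * u ^ Suc n) sums (g u - 1)" .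
    from S show "summable (\<lambda>n. a_coef \<kappa> t (Suc n) * u ^ Suc n)" by (rule sums_summable)
    from S have "(\<Sum>n. a_coef \<kappa> t (Suc n) * u ^ Suc n) = g u - 1" by (rule sums_unique[symmetric])
    thus "phi \<kappa> t (1 + (\<Sum>n. a_coef \<kappa> t (Suc n) * u ^ Suc n)) = u" using sg(3)[OF ub] by simp
  qed
qed


end
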